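(* Let $\mathcal{F}=\langle Q_i:i<\omega\rangle$ be a sequence of quantifiers on $\mathbb{N}$, each of which is a finite boolean combination of principal quantifiers $Q_{A_{i,k}}$ (with $A_{i,k}\subseteq\mathbb{N}^{d_i}$). Let $\mathrm{Aut}(\mathcal{F})$ be the group of permutations of $\mathbb{N}$ fixing every $Q_i$. Then $\mathrm{Aut}(\mathcal{F})$ is a closed subgroup of $S_\infty$, and every orbit of $\mathrm{Aut}(\mathcal{F})$ on $\mathbb{N}^{<\omega}$ is definable in $\mathscr{L}_{\omega_1\omega}(\mathcal{F})$.
   Context: For $A\subseteq\mathbb{N}^d$, the principal quantifier $Q_A=\{X\subseteq\mathbb{N}^d:A\subseteq X\}$ is a quantifier of type $\langle d\rangle$ on $\mathbb{N}$. A permutation $g$ of $\mathbb{N}$ acts coordinatewise on tuples and on subsets by $g(X)=\{g(x):x\in X\}$; $g$ fixes a quantifier $Q$ of type $\langle d\rangle$ if $X\in Q\iff g(X)\in Q$ for all $X\subseteq\mathbb{N}^d$. $S_\infty$ is the group of permutations of $\mathbb{N}$ with the topology of pointwise convergence. $\mathscr{L}_{\omega_1\omega}(\mathcal{F})$ extends $\mathscr{L}_{\omega_1\omega}$ by formulas $Q_ix\,\varphi(x,y)$ for each $i$, with $\mathbb{N}\models Q_ix\,\varphi(x,b)$ iff $\{a\in\mathbb{N}^{d_i}:\mathbb{N}\models\varphi(a,b)\}\in Q_i$. A set of tuples is definable in $\mathscr{L}_{\omega_1\omega}(\mathcal{F})$ if some parameter-free formula whose only non-logical symbols are the $Q_i$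 defines it in $\mathbb{N}$. *)

theory Defs
  imports "HOL-Analysis.Analysis" "HOL-Algebra.Bij"
begin

definition tuples :: "nat \<Rightarrow> nat list set" where
  "tuples d = {xs. length xs = d}"

text \<open>Quantifiers of type d on N: families of subsets of N^d.
  The principal quantifier Q_A = {X subset of N^d. A subset of X}.\<close>

definition principal :: "nat \<Rightarrow> nat list set \<Rightarrow> nat list set set" where
  "principal d A = {X. X \<subseteq> tuples d \<and> A \<subseteq> X}"

datatype bcomb = BAtom nat | BNot bcomb | BAnd bcomb bcomb | BOr bcomb bcomb

primrec bquant :: "nat \<Rightarrow> (nat \<Rightarrow> nat list set) \<Rightarrow> bcomb \<Rightarrow> nat list set set" where
  "bquant d A (BAtom k) = principal d (A k)"
| "bquant d A (BNot b) = Pow (tuples d) - bquant d A b"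
| "bquant d A (BAnd b c) = bquant d A b \<inter> bquant d A c"
| "bquant d A (BOr b c) = bquant d A b \<union> bquant d A c"

definition fin_bool_comb_principal :: "nat \<Rightarrow> nat list set set \<Rightarrow> bool" where
  "fin_bool_comb_principal d Q \<longleftrightarrow>
     (\<exists>A b. (\<forall>k. A k \<subseteq> tuples d) \<and> Q = bquant d A b)"

definition fixes_quant :: "nat \<Rightarrow> (nat \<Rightarrow> nat) \<Rightarrow> nat list set set \<Rightarrow> bool" where
  "fixes_quant d g Q \<longleftrightarrow>
     (\<forall>X. X \<subseteq> tuples d \<longrightarrow> (X \<in> Q \<longleftrightarrow> (map g) ` X \<in> Q))"

definition Aut :: "(nat \<Rightarrow> nat) \<Rightarrow> (nat \<Rightarrow> nat list set set) \<Rightarrow> (nat \<Rightarrow> nat) set" where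
  "Aut d Q = {g. bij g \<and> (\<forall>i. fixes_quant (d i) g (Q i))}"

text \<open>S_infinity: permutations of N, as a subspace of N^N with the product
  topology (N carries its discrete metric topology); this is the topology of
  pointwise convergence.\<close>

definition Sinf :: "(nat \<Rightarrow> nat) set" where
  "Sinf = {g. bij g}"

text \<open>Syntax of L_{omega_1 omega}(F): variables are natural numbers;
  conjunctions are countable (indexed by nat); Qf i xs phi is the formula
  Q_i xs phi binding the tuple of variables xs.\<close>

datatype form =
    FEq nat nat
  | FNeg form
  | FConj "nat \<Rightarrow> form"
  | FEx nat form
  | FQ nat "nat list" form

primrec fv :: "form \<Rightarrow> nat set" where
  "fv (FEq x y) = {x, y}"
| "fv (FNeg \<phi>) = fv \<phi>"
| "fv (FConj \<Phi>) = (\<Union>k. fv (\<Phi> k))"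
| "fv (FEx x \<phi>) = fv \<phi> - {x}"
| "fv (FQ i xs \<phi>) = fv \<phi> - set xs"

definition upd_list :: "(nat \<Rightarrow> nat) \<Rightarrow> nat list \<Rightarrow> nat list \<Rightarrow> (nat \<Rightarrow> nat)" where
  "upd_list e xs as = foldr (\<lambda>(v, a) f. f(v := a)) (zip xs as) e"

text \<open>Satisfaction in the structure N (only non-logical symbols: the Q i).
  Ill-formed quantifier applications (wrong arity or repeated variables) are false.\<close>

primrec sat :: "(nat \<Rightarrow> nat) \<Rightarrow> (nat \<Rightarrow> nat list set set) \<Rightarrow> form \<Rightarrow> (nat \<Rightarrow> nat) \<Rightarrow> bool" where
  "sat d Q (FEq x y) e = (e x = e y)"
| "sat d Q (FNeg \<phi>) e = (\<not> sat d Q \<phi> e)"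
| "sat d Q (FConj \<Phi>) e = (\<forall>k. sat d Q (\<Phi> k) e)"
| "sat d Q (FEx x \<phi>) e = (\<exists>a. sat d Q \<phi> (e(x := a)))"
| "sat d Q (FQ i xs \<phi>) e =
     (length xs = d i \<and> distinct xs \<and>
      {as \<in> tuples (d i). sat d Q \<phi> (upd_list e xs as)} \<in> Q i)"

definition tuple_assign :: "nat list \<Rightarrow> nat \<Rightarrow> nat" where
  "tuple_assign b v = (if v < length b then b ! v else 0)"

definition definable :: "(nat \<Rightarrow> nat) \<Rightarrow> (nat \<Rightarrow> nat list set set) \<Rightarrow> nat \<Rightarrow> nat list set \<Rightarrow> bool" where
  "definable d Q n S \<longleftrightarrow>
     (\<exists>\<phi>. fv \<phi> \<subseteq> {..<n} \<and> S = {b \<in> tuples n. sat d Q \<phi> (tuple_assign b)})"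

definition orbit_tuple :: "(nat \<Rightarrow> nat) set \<Rightarrow> nat list \<Rightarrow> nat list set" where
  "orbit_tuple G a = {map g a | g. g \<in> G}"

end

theory Submission
  imports Defs
begin



lemma map_tuples: "X \<subseteq> tuples d \<Longrightarrow> map g ` X \<subseteq> tuples d"
  by (auto simp: tuples_def)

lemma map_image_tuples: "surj g \<Longrightarrow> map g ` tuples d = tuples d"
proof
  show "map g ` tuples d \<subseteq> tuples d" by (auto simp: tuples_def)
  assume s: "surj g"
  show "tuples d \<subseteq> map g ` tuples d"
  proof
    fix w assume "w \<in> tuples d"
    then have "map (inv_into UNIV g) w \<in> tuples d" "map g (map (inv_into UNIV g) w) = w"
      using s by (auto simp: tuples_def surj_f_inv_f intro: map_idI)
    then show "w \<in> map g ` tuples d" by (metis image_eqI)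
  qed
qed

lemma fixes_comp:
  assumes "fixes_quant d g Q" "fixes_quant d f Q"
  shows "fixes_quant d (g \<circ> f) Q"
  unfolding fixes_quant_def
proof (intro allI impI)
  fix X assume X: "X \<subseteq> tuples d"
  have "map (g \<circ> f) ` X = map g ` (map f ` X)" by (auto simp: image_image)
  then show "X \<in> Q \<longleftrightarrow> map (g \<circ> f) ` X \<in> Q"
    using assms X map_tuples[OF X, of f] unfolding fixes_quant_def by metis
qed

lemma fixes_inv:
  assumes b: "bij g" and f: "fixes_quant d g Q"
  shows "fixes_quant d (inv_into UNIV g) Q"
  unfolding fixes_quant_def
proof (intro allI impI)
  fix X assume X: "X \<subseteq> tuples d"
  have gi: "g \<circ> inv_into UNIV g = id" using b by (simp add: bij_is_surj surj_f_inv_f comp_def fun_eq_iff)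
  have "map g ` (map (inv_into UNIV g) ` X) = X"
    by (simp add: image_image gi)
  then show "X \<in> Q \<longleftrightarrow> map (inv_into UNIV g) ` X \<in> Q"
    using f map_tuples[OF X, of "inv_into UNIV g"] unfolding fixes_quant_def by metis
qed

lemma Bij_UNIV: "Bij UNIV = {g. bij g}"
  by (auto simp: Bij_def)

lemma subgroup_Aut: "subgroup (Aut d Q) (BijGroup (UNIV :: nat set))"
proof (rule group.subgroupI[OF group_BijGroup])
  show "Aut d Q \<subseteq> carrier (BijGroup UNIV)"
    by (auto simp: BijGroup_def Bij_UNIV Aut_def)
  show "Aut d Q \<noteq> {}"
  proof -
    have "id \<in> Aut d Q" by (auto simp: Aut_def fixes_quant_def)
    then show ?thesis by blast
  qed
  fix a assume a: "a \<in> Aut d Q"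
  then have ab: "a \<in> Bij UNIV" by (auto simp: Bij_UNIV Aut_def)
  have "inv\<^bsub>BijGroup UNIV\<^esub> a = inv_into UNIV a"
    using inv_BijGroup[OF ab] by auto
  then show "inv\<^bsub>BijGroup UNIV\<^esub> a \<in> Aut d Q"
    using a by (auto simp: Aut_def bij_imp_bij_inv bij_is_surj fixes_inv)
next
  fix a b assume a: "a \<in> Aut d Q" and b: "b \<in> Aut d Q"
  then have "a \<otimes>\<^bsub>BijGroup UNIV\<^esub> b = a \<circ> b"
    by (auto simp: BijGroup_def Bij_UNIV Aut_def compose_def)
  then show "a \<otimes>\<^bsub>BijGroup UNIV\<^esub> b \<in> Aut d Q"
    using a b by (auto simp: Aut_def bij_comp fixes_comp)
qed



primrec atoms :: "bcomb \<Rightarrow> nat set" where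
  "atoms (BAtom k) = {k}"
| "atoms (BNot b) = atoms b"
| "atoms (BAnd b c) = atoms b \<union> atoms c"
| "atoms (BOr b c) = atoms b \<union> atoms c"

lemma finite_atoms: "finite (atoms b)"
  by (induction b) auto

lemma bq_cong:
  assumes "X \<subseteq> tuples d" "Y \<subseteq> tuples d" "\<forall>k\<in>atoms b. A k \<subseteq> X \<longleftrightarrow> A k \<subseteq> Y"
  shows "X \<in> bquant d A b \<longleftrightarrow> Y \<in> bquant d A b"
  using assms by (induction b) (auto simp: principal_def)

definition fcond :: "nat \<Rightarrow> nat list set set \<Rightarrow> (nat \<Rightarrow> nat) \<Rightarrow> nat list set \<Rightarrow> bool" where
  "fcond d Q g W \<longleftrightarrow> (tuples d - W \<in> Q \<longleftrightarrow> tuples d - map g ` W \<in> Q)"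

lemma KL1:
  assumes b: "bij g" and f: "fixes_quant d g Q" and W: "W \<subseteq> tuples d"
  shows "fcond d Q g W"
proof -
  have "map g ` (tuples d - W) = map g ` tuples d - map g ` W"
    by (rule image_set_diff) (use b in \<open>simp add: bij_is_inj inj_mapI\<close>)
  also have "map g ` tuples d = tuples d" using b by (simp add: bij_is_surj map_image_tuples)
  finally show ?thesis using f unfolding fixes_quant_def fcond_def by auto
qed

lemma KL2:
  assumes b: "bij g" and A: "\<forall>k. A k \<subseteq> tuples d"
    and c: "\<forall>W. finite W \<and> W \<subseteq> tuples d \<longrightarrow> fcond d (bquant d A bb) g W"
  shows "fixes_quant d g (bquant d A bb)"
  unfolding fixes_quant_def
proof (intro allI impI)
  fix X assume X: "X \<subseteq> tuples d"
  define K where "K = atoms bb"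
  define K1 where "K1 = {k\<in>K. \<not> A k \<subseteq> X}"
  define K2 where "K2 = {k\<in>K. \<not> A k \<subseteq> map g ` X}"
  define wa where "wa k = (SOME w. w \<in> A k \<and> w \<notin> X)" for k
  define wb where "wb k = (SOME w. w \<in> A k \<and> w \<notin> map g ` X)" for k
  have wa: "wa k \<in> A k" "wa k \<notin> X" if "k \<in> K1" for k
    using someI_ex[of "\<lambda>w. w \<in> A k \<and> w \<notin> X"] that unfolding wa_def K1_def by auto
  have wb: "wb k \<in> A k" "wb k \<notin> map g ` X" if "k \<in> K2" for k
    using someI_ex[of "\<lambda>w. w \<in> A k \<and> w \<notin> map g ` X"] that unfolding wb_def K2_def by auto
  define ig where "ig = inv_into UNIV g"
  have gi: "map g (map ig w) = w" for w
    using b by (simp add: ig_def bij_is_surj surj_f_inv_f map_idI)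
  have ig: "map ig (map g w) = w" for w
    using b by (simp add: ig_def bij_is_inj inv_into_f_f map_idI)
  define W where "W = wa ` K1 \<union> map ig ` wb ` K2"
  have finK: "finite K" unfolding K_def by (rule finite_atoms)
  have finW: "finite W" unfolding W_def K1_def K2_def using finK by auto
  have Wt: "W \<subseteq> tuples d" unfolding W_def using wa wb A by (auto simp: tuples_def) blast+
  have gW: "map g ` W = map g ` wa ` K1 \<union> wb ` K2"
    unfolding W_def image_Un image_image gi by simp
  have XW: "X \<inter> W = {}"
    unfolding W_def using wa wb gi by (auto) (metis gi image_eqI wb(2))
  have gXW: "map g ` X \<inter> map g ` W = {}"
    using XW b by (auto simp: bij_is_inj inj_mapI)
  have gXt: "map g ` X \<subseteq> tuples d" using X map_tuples by auto
  have gWt: "map g ` W \<subseteq> tuples d" using Wt map_tuples by auto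
  let ?Q = "bquant d A bb"
  have e1: "X \<in> ?Q \<longleftrightarrow> tuples d - W \<in> ?Q"
  proof (rule bq_cong)
    show "X \<subseteq> tuples d" "tuples d - W \<subseteq> tuples d" using X by auto
    show "\<forall>k\<in>atoms bb. (A k \<subseteq> X) = (A k \<subseteq> tuples d - W)"
    proof
      fix k assume k: "k \<in> atoms bb"
      show "(A k \<subseteq> X) = (A k \<subseteq> tuples d - W)"
      proof
        assume "A k \<subseteq> X" then show "A k \<subseteq> tuples d - W" using X XW by auto
      next
        assume h: "A k \<subseteq> tuples d - W"
        show "A k \<subseteq> X"
        proof (rule ccontr)
          assume "\<not> A k \<subseteq> X"
          then have "k \<in> K1" using k unfolding K1_def K_def by auto
          then show False using wa[of k] h unfolding W_def by auto
        qed
      qed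
    qed
  qed
  have e2: "map g ` X \<in> ?Q \<longleftrightarrow> tuples d - map g ` W \<in> ?Q"
  proof (rule bq_cong)
    show "map g ` X \<subseteq> tuples d" "tuples d - map g ` W \<subseteq> tuples d" using gXt by auto
    show "\<forall>k\<in>atoms bb. (A k \<subseteq> map g ` X) = (A k \<subseteq> tuples d - map g ` W)"
    proof
      fix k assume k: "k \<in> atoms bb"
      show "(A k \<subseteq> map g ` X) = (A k \<subseteq> tuples d - map g ` W)"
      proof
        assume "A k \<subseteq> map g ` X" then show "A k \<subseteq> tuples d - map g ` W" using gXt gXW by auto
      next
        assume h: "A k \<subseteq> tuples d - map g ` W"
        show "A k \<subseteq> map g ` X"
        proof (rule ccontr)
          assume "\<not> A k \<subseteq> map g ` X"
          then have "k \<in> K2" using k unfolding K2_def K_def by auto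
          then show False using wb[of k] h unfolding gW by auto
        qed
      qed
    qed
  qed
  have "fcond d ?Q g W" using c finW Wt by auto
  then show "X \<in> ?Q \<longleftrightarrow> map g ` X \<in> ?Q" using e1 e2 unfolding fcond_def by auto
qed



lemma upd_list_notin: "v \<notin> set xs \<Longrightarrow> upd_list e xs as v = e v"
proof (induction xs arbitrary: as)
  case Nil then show ?case by (simp add: upd_list_def)
next
  case (Cons x xs) then show ?case by (cases as) (auto simp: upd_list_def)
qed

lemma upd_list_in: "length as = length xs \<Longrightarrow> v \<in> set xs \<Longrightarrow> upd_list e xs as v = upd_list e' xs as v"
proof (induction xs arbitrary: as)
  case Nil then show ?case by (simp add: upd_list_def)
next
  case (Cons x xs) then show ?case by (cases as) (auto simp: upd_list_def)
qed

lemma upd_list_nth: "length as = length xs \<Longrightarrow> distinct xs \<Longrightarrow> l < length xs \<Longrightarrow> upd_list e xs as (xs ! l) = as ! l"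
proof (induction xs arbitrary: as l)
  case Nil then show ?case by (simp add: upd_list_def)
next
  case (Cons x xs) then show ?case
    by (cases as; cases l) (auto simp: upd_list_def)
qed

lemma upd_list_comp: "g \<circ> upd_list e xs as = upd_list (g \<circ> e) xs (map g as)"
proof (induction xs arbitrary: as)
  case Nil then show ?case by (simp add: upd_list_def)
next
  case (Cons x xs) then show ?case by (cases as) (auto simp: upd_list_def fun_eq_iff)
qed

lemma sat_cong: "(\<forall>v\<in>fv \<phi>. e v = e' v) \<Longrightarrow> sat d Q \<phi> e \<longleftrightarrow> sat d Q \<phi> e'"
proof (induction \<phi> arbitrary: e e')
  case (FEq x y) then show ?case by simp
next
  case (FNeg \<phi>) then show ?case by simp
next
  case (FConj \<Phi>)
  then show ?case by simp (metis rangeI)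
next
  case (FEx x \<phi>)
  have "sat d Q \<phi> (e(x := a)) \<longleftrightarrow> sat d Q \<phi> (e'(x := a))" for a
  proof (rule FEx.IH)
    show "\<forall>v\<in>fv \<phi>. (e(x := a)) v = (e'(x := a)) v" using FEx.prems by auto
  qed
  then show ?case by simp
next
  case (FQ i xs \<phi>)
  have "sat d Q \<phi> (upd_list e xs as) \<longleftrightarrow> sat d Q \<phi> (upd_list e' xs as)"
    if "length as = length xs" for as
  proof (rule FQ.IH, intro ballI)
    fix v assume "v \<in> fv \<phi>"
    then show "upd_list e xs as v = upd_list e' xs as v"
      using FQ.prems that upd_list_in[OF that] upd_list_notin by (cases "v \<in> set xs") auto
  qed
  then have "length xs = d i \<Longrightarrow> {as \<in> tuples (d i). sat d Q \<phi> (upd_list e xs as)} =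
      {as \<in> tuples (d i). sat d Q \<phi> (upd_list e' xs as)}"
    by (auto simp: tuples_def)
  then show ?case by auto
qed

lemma sat_Aut:
  assumes g: "g \<in> Aut d Q"
  shows "sat d Q \<phi> (g \<circ> e) \<longleftrightarrow> sat d Q \<phi> e"
proof -
  have b: "bij g" and f: "\<And>i. fixes_quant (d i) g (Q i)" using g by (auto simp: Aut_def)
  define ig where "ig = inv_into UNIV g"
  have gi: "map g (map ig w) = w" for w
    using b by (simp add: ig_def bij_is_surj surj_f_inv_f map_idI)
  have ig: "map ig (map g w) = w" for w
    using b by (simp add: ig_def bij_is_inj inv_into_f_f map_idI)
  have gis: "g (ig y) = y" for y using b by (simp add: ig_def bij_is_surj surj_f_inv_f)
  show ?thesis
  proof (induction \<phi> arbitrary: e)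
    case (FEq x y) then show ?case using b by (simp add: bij_is_inj inj_eq)
  next
    case (FNeg \<phi>) then show ?case by simp
  next
    case (FConj \<Phi>) then show ?case by simp
  next
    case (FEx x \<phi>)
    have "(\<exists>a. sat d Q \<phi> ((g \<circ> e)(x := a))) \<longleftrightarrow> (\<exists>a. sat d Q \<phi> ((g \<circ> e)(x := g a)))"
      by (metis gis)
    also have "\<dots> \<longleftrightarrow> (\<exists>a. sat d Q \<phi> (g \<circ> (e(x := a))))"
      by (simp add: fun_upd_comp)
    also have "\<dots> \<longleftrightarrow> (\<exists>a. sat d Q \<phi> (e(x := a)))" by (simp only: FEx.IH)
    finally show ?case by (simp only: sat.simps)
  next
    case (FQ i xs \<phi>)
    define S where "S = {as \<in> tuples (d i). sat d Q \<phi> (upd_list e xs as)}"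
    have "{as \<in> tuples (d i). sat d Q \<phi> (upd_list (g \<circ> e) xs as)} = map g ` S"
    proof (intro equalityI subsetI)
      fix as assume as: "as \<in> {as \<in> tuples (d i). sat d Q \<phi> (upd_list (g \<circ> e) xs as)}"
      have "upd_list (g \<circ> e) xs as = g \<circ> upd_list e xs (map ig as)"
        by (simp only: upd_list_comp gi)
      then have "map ig as \<in> S" using as FQ.IH by (auto simp: S_def tuples_def)
      then show "as \<in> map g ` S" by (metis gi image_eqI)
    next
      fix as assume "as \<in> map g ` S"
      then obtain bs where "bs \<in> S" "as = map g bs" by auto
      then show "as \<in> {as \<in> tuples (d i). sat d Q \<phi> (upd_list (g \<circ> e) xs as)}"
        using FQ.IH[of "upd_list e xs bs"] by (auto simp: S_def tuples_def upd_list_comp)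
    qed
    moreover have "S \<subseteq> tuples (d i)" by (auto simp: S_def)
    ultimately have key: "({as \<in> tuples (d i). sat d Q \<phi> (upd_list (g \<circ> e) xs as)} \<in> Q i) \<longleftrightarrow> (S \<in> Q i)"
      using f[of i] unfolding fixes_quant_def by metis
    show ?case unfolding sat.simps key S_def ..
  qed
qed

definition ta :: "nat list \<Rightarrow> nat \<Rightarrow> nat" where "ta = tuple_assign"

definition eqv :: "(nat \<Rightarrow> nat) \<Rightarrow> (nat \<Rightarrow> nat list set set) \<Rightarrow> nat list \<Rightarrow> nat list \<Rightarrow> bool" where
  "eqv d Q x y \<longleftrightarrow> length x = length y \<and>
     (\<forall>\<phi>. fv \<phi> \<subseteq> {..<length x} \<longrightarrow> (sat d Q \<phi> (tuple_assign x) \<longleftrightarrow> sat d Q \<phi> (tuple_assign y)))"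

lemma eqv_sym: "eqv d Q x y \<Longrightarrow> eqv d Q y x"
  by (auto simp: eqv_def)

lemma eqv_Aut: assumes "g \<in> Aut d Q" shows "eqv d Q x (map g x)"
  unfolding eqv_def
proof (intro conjI allI impI)
  fix \<phi> assume fv: "fv \<phi> \<subseteq> {..<length x}"
  have "sat d Q \<phi> (tuple_assign (map g x)) \<longleftrightarrow> sat d Q \<phi> (g \<circ> tuple_assign x)"
    by (rule sat_cong) (use fv in \<open>auto simp: tuple_assign_def\<close>)
  then show "sat d Q \<phi> (tuple_assign x) \<longleftrightarrow> sat d Q \<phi> (tuple_assign (map g x))"
    using sat_Aut[OF assms] by simp
qed simp

lemma ta_snoc: "v \<in> {..<Suc (length x)} \<Longrightarrow> tuple_assign (x @ [c]) v = ((tuple_assign x)(length x := c)) v"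
  by (auto simp: tuple_assign_def nth_append)

lemma eqv_ext:
  assumes e: "eqv d Q x y"
  shows "\<exists>z. eqv d Q (x @ [c]) (y @ [z])"
proof (rule ccontr)
  assume "\<not> ?thesis"
  then have "\<forall>z. \<exists>\<phi>. fv \<phi> \<subseteq> {..<Suc (length x)} \<and>
      \<not> (sat d Q \<phi> (tuple_assign (x @ [c])) \<longleftrightarrow> sat d Q \<phi> (tuple_assign (y @ [z])))"
    using e by (auto simp: eqv_def)
  then obtain \<phi> where \<phi>: "\<And>z. fv (\<phi> z) \<subseteq> {..<Suc (length x)}"
    "\<And>z. \<not> (sat d Q (\<phi> z) (tuple_assign (x @ [c])) \<longleftrightarrow> sat d Q (\<phi> z) (tuple_assign (y @ [z])))"
    by metis
  define \<psi> where "\<psi> z = (if sat d Q (\<phi> z) (tuple_assign (x @ [c])) then \<phi> z else FNeg (\<phi> z))" for z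
  have \<psi>: "fv (\<psi> z) \<subseteq> {..<Suc (length x)}" "sat d Q (\<psi> z) (tuple_assign (x @ [c]))"
    "\<not> sat d Q (\<psi> z) (tuple_assign (y @ [z]))" for z
    using \<phi>[of z] by (auto simp: \<psi>_def)
  define \<Phi> where "\<Phi> = FEx (length x) (FConj \<psi>)"
  have fv: "fv \<Phi> \<subseteq> {..<length x}"
  proof
    fix v assume "v \<in> fv \<Phi>"
    then obtain k where "v \<in> fv (\<psi> k)" "v \<noteq> length x" by (auto simp: \<Phi>_def)
    then show "v \<in> {..<length x}" using \<psi>(1)[of k] by (auto simp: less_Suc_eq)
  qed
  have "sat d Q (\<psi> z) ((tuple_assign x)(length x := c))" for z
    using \<psi>(2)[of z] sat_cong[of "\<psi> z" "tuple_assign (x @ [c])" "(tuple_assign x)(length x := c)"]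
      \<psi>(1)[of z] ta_snoc by blast
  then have "sat d Q \<Phi> (tuple_assign x)" by (auto simp: \<Phi>_def)
  then have "sat d Q \<Phi> (tuple_assign y)" using e fv by (auto simp: eqv_def)
  then obtain z where "\<forall>k. sat d Q (\<psi> k) ((tuple_assign y)(length x := z))" by (auto simp: \<Phi>_def)
  then have "sat d Q (\<psi> z) ((tuple_assign y)(length y := z))" using e by (simp add: eqv_def)
  moreover have "\<forall>v\<in>fv (\<psi> z). tuple_assign (y @ [z]) v = ((tuple_assign y)(length y := z)) v"
  proof
    fix v assume "v \<in> fv (\<psi> z)"
    then have "v \<in> {..<Suc (length y)}" using \<psi>(1)[of z] e by (auto simp: eqv_def)
    then show "tuple_assign (y @ [z]) v = ((tuple_assign y)(length y := z)) v" by (rule ta_snoc)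
  qed
  ultimately have "sat d Q (\<psi> z) (tuple_assign (y @ [z]))"
    using sat_cong by blast
  then show False using \<psi>(3) by blast
qed



definition TT :: form where "TT = FEx 0 (FEq 0 0)"

lemma TT_sat[simp]: "sat d Q TT e" by (auto simp: TT_def)
lemma TT_fv[simp]: "fv TT = {}" by (auto simp: TT_def)

definition eqt :: "nat \<Rightarrow> nat list \<Rightarrow> form" where
  "eqt N ix = FConj (\<lambda>l. if l < length ix then FEq (N+l) (ix!l) else TT)"

lemma eqt_sat: "sat d Q (eqt N ix) u \<longleftrightarrow> (\<forall>l<length ix. u (N+l) = u (ix!l))"
  by (auto simp: eqt_def)

lemma eqt_fv: "fv (eqt N ix) \<subseteq> {N..<N + length ix} \<union> set ix"
  by (auto simp: eqt_def split: if_splits)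

lemma Wform:
  assumes fin: "finite W" and Wt: "W \<subseteq> tuples (d i)" and Wc: "\<forall>w\<in>W. set w \<subseteq> set c"
  shows "\<exists>\<phi>. fv \<phi> \<subseteq> {..<length c} \<and>
    (\<forall>h. sat d Q \<phi> (tuple_assign (map h c)) \<longleftrightarrow> tuples (d i) - map h ` W \<in> Q i)"
proof -
  define N where "N = length c"
  define D where "D = d i"
  define ix where "ix w = map (\<lambda>x. SOME j. j < N \<and> c!j = x) w" for w
  have ixl: "length (ix w) = length w" for w by (simp add: ix_def)
  have ixp: "ix w ! l < N \<and> c ! (ix w ! l) = w ! l" if "w \<in> W" "l < length w" for w l
  proof -
    have "w ! l \<in> set c" using Wc that nth_mem by blast
    then have "\<exists>j. j < N \<and> c!j = w!l" by (auto simp: N_def in_set_conv_nth)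
    then show ?thesis using that someI_ex[of "\<lambda>j. j < N \<and> c!j = w!l"] unfolding ix_def by simp
  qed
  obtain ws where ws: "set ws = W" using finite_list[OF fin] by blast
  define body where "body = FConj (\<lambda>k. if k < length ws then FNeg (eqt N (ix (ws!k))) else TT)"
  define \<phi> where "\<phi> = FQ i [N..<N+D] body"
  have "fv body \<subseteq> {..<N+D}"
  proof
    fix v assume "v \<in> fv body"
    then obtain k where k: "k < length ws" "v \<in> fv (eqt N (ix (ws!k)))"
      by (auto simp: body_def split: if_splits)
    have w: "ws!k \<in> W" "length (ws!k) = D" using k ws Wt by (auto simp: tuples_def D_def)
    have "v \<in> {N..<N + D} \<union> set (ix (ws!k))" using eqt_fv[of N "ix (ws!k)"] k w ixl[of "ws!k"] by auto
    then show "v \<in> {..<N+D}" using ixp[OF w(1)] w ixl by (auto simp: in_set_conv_nth) (metis add.commute trans_less_add2)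
  qed
  then have fv: "fv \<phi> \<subseteq> {..<N}" by (auto simp: \<phi>_def)
  have sem: "sat d Q \<phi> (tuple_assign (map h c)) \<longleftrightarrow> tuples (d i) - map h ` W \<in> Q i" for h
  proof -
    define e where "e = tuple_assign (map h c)"
    have "{as \<in> tuples D. sat d Q body (upd_list e [N..<N+D] as)} = tuples D - map h ` W"
    proof (intro equalityI subsetI)
      fix as assume "as \<in> {as \<in> tuples D. sat d Q body (upd_list e [N..<N+D] as)}"
      then have as: "length as = D" "sat d Q body (upd_list e [N..<N+D] as)" by (auto simp: tuples_def)
      have "as \<noteq> map h w" if wW: "w \<in> W" for w
      proof
        assume asw: "as = map h w"
        obtain k where k: "k < length ws" "ws!k = w" using ws wW by (auto simp: in_set_conv_nth)
        have lw: "length w = D" using wW Wt by (auto simp: tuples_def D_def)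
        have "sat d Q (if k < length ws then FNeg (eqt N (ix (ws!k))) else TT) (upd_list e [N..<N+D] as)"
          using as(2) unfolding body_def sat.simps by blast
        then have "\<not> sat d Q (eqt N (ix w)) (upd_list e [N..<N+D] as)"
          using k by simp
        moreover have "sat d Q (eqt N (ix w)) (upd_list e [N..<N+D] as)"
          unfolding eqt_sat
        proof (intro allI impI)
          fix l assume l: "l < length (ix w)"
          then have lD: "l < D" using ixl lw by simp
          have "upd_list e [N..<N+D] as (N+l) = as ! l"
            using upd_list_nth[of as "[N..<N+D]" l e] as(1) lD by simp
          moreover have "upd_list e [N..<N+D] as (ix w ! l) = e (ix w ! l)"
            by (rule upd_list_notin) (use ixp[OF wW, of l] l ixl[of w] in auto)
          moreover have "e (ix w ! l) = h (w ! l)"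
            using ixp[OF wW] l ixl by (auto simp: e_def tuple_assign_def N_def)
          ultimately show "upd_list e [N..<N+D] as (N+l) = upd_list e [N..<N+D] as (ix w ! l)"
            using asw lD lw by simp
        qed
        ultimately show False by blast
      qed
      then show "as \<in> tuples D - map h ` W" using as by (auto simp: tuples_def)
    next
      fix as assume "as \<in> tuples D - map h ` W"
      then have as: "length as = D" "\<And>w. w \<in> W \<Longrightarrow> as \<noteq> map h w" by (auto simp: tuples_def)
      have "\<not> sat d Q (eqt N (ix (ws!k))) (upd_list e [N..<N+D] as)" if k: "k < length ws" for k
      proof
        define w where "w = ws!k"
        have wW: "w \<in> W" using ws k by (auto simp: w_def)
        have lw: "length w = D" using wW Wt by (auto simp: tuples_def D_def)
        assume "sat d Q (eqt N (ix (ws!k))) (upd_list e [N..<N+D] as)"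
        then have h: "\<forall>l<length (ix w). upd_list e [N..<N+D] as (N+l) = upd_list e [N..<N+D] as (ix w ! l)"
          unfolding eqt_sat w_def .
        have "as ! l = map h w ! l" if l: "l < length as" for l
        proof -
          have lD: "l < D" using l as by simp
          have "upd_list e [N..<N+D] as (N+l) = as ! l"
            using upd_list_nth[of as "[N..<N+D]" l e] as(1) lD by simp
          moreover have "upd_list e [N..<N+D] as (ix w ! l) = e (ix w ! l)"
            by (rule upd_list_notin) (use ixp[OF wW, of l] lD lw ixl[of w] in auto)
          moreover have "e (ix w ! l) = h (w ! l)"
            using ixp[OF wW] lD lw ixl by (auto simp: e_def tuple_assign_def N_def)
          ultimately show ?thesis using h lD lw ixl by auto
        qed
        then have "as = map h w" using as(1) lw by (simp add: list_eq_iff_nth_eq)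
        then show False using as(2) wW by blast
      qed
      then show "as \<in> {as \<in> tuples D. sat d Q body (upd_list e [N..<N+D] as)}"
        using as(1) by (auto simp: body_def tuples_def)
    qed
    then show ?thesis by (simp add: \<phi>_def e_def D_def)
  qed
  show ?thesis using fv sem N_def by blast
qed



definition fwd where "fwd d Q x y c = (SOME z. eqv d Q (x @ [c]) (y @ [z]))"

lemma fwd_eqv: "eqv d Q x y \<Longrightarrow> eqv d Q (x @ [c]) (y @ [fwd d Q x y c])"
  unfolding fwd_def using eqv_ext by (rule someI_ex)

definition step where
  "step d Q k p = (let x1 = fst p @ [k]; y1 = snd p @ [fwd d Q (fst p) (snd p) k]
     in (x1 @ [fwd d Q y1 x1 k], y1 @ [k]))"

primrec BF where
  "BF d Q a b 0 = (a, b)"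
| "BF d Q a b (Suc k) = step d Q k (BF d Q a b k)"

lemma step_eqv: "eqv d Q (fst p) (snd p) \<Longrightarrow> eqv d Q (fst (step d Q k p)) (snd (step d Q k p))"
  unfolding step_def Let_def fst_conv snd_conv by (rule eqv_sym[OF fwd_eqv[OF eqv_sym[OF fwd_eqv]]])

lemma BF_eqv: "eqv d Q a b \<Longrightarrow> eqv d Q (fst (BF d Q a b k)) (snd (BF d Q a b k))"
  by (induction k) (simp_all add: step_eqv)

lemma BF_Suc: "\<exists>u v. fst (BF d Q a b (Suc k)) = fst (BF d Q a b k) @ u \<and>
   snd (BF d Q a b (Suc k)) = snd (BF d Q a b k) @ v"
  by (simp add: step_def Let_def)

lemma BF_mono: "k \<le> K \<Longrightarrow> \<exists>u v. fst (BF d Q a b K) = fst (BF d Q a b k) @ u \<and>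
   snd (BF d Q a b K) = snd (BF d Q a b k) @ v"
proof (induction K rule: dec_induct)
  case base then show ?case by auto
next
  case (step K)
  then show ?case using BF_Suc[of d Q a b K] by (metis append.assoc)
qed

lemma BF_in: "k \<in> set (fst (BF d Q a b (Suc k)))" "k \<in> set (snd (BF d Q a b (Suc k)))"
  by (simp_all add: step_def Let_def)

lemma back_forth:
  assumes e: "eqv d Q a b"
  shows "\<exists>g. bij g \<and> map g a = b \<and> (\<forall>E. finite E \<longrightarrow> (\<exists>c. E \<subseteq> set c \<and> eqv d Q c (map g c)))"
proof -
  define X where "X k = fst (BF d Q a b k)" for k
  define Y where "Y k = snd (BF d Q a b k)" for k
  have eX: "eqv d Q (X k) (Y k)" for k using BF_eqv[OF e] by (simp add: X_def Y_def)
  then have len: "length (X k) = length (Y k)" for k by (simp add: eqv_def)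
  have pre: "X K ! i = X k ! i \<and> Y K ! i = Y k ! i" if "k \<le> K" "i < length (X k)" for k K i
    using BF_mono[OF that(1), of d Q a b] that len[of k] by (auto simp: X_def Y_def nth_append)
  have lenm: "length (X k) \<le> length (X K)" if "k \<le> K" for k K
    using BF_mono[OF that, of d Q a b] by (auto simp: X_def)
  have setm: "set (X k) \<subseteq> set (X K)" if "k \<le> K" for k K
    using BF_mono[OF that, of d Q a b] by (auto simp: X_def)
  define R where "R = {(X k ! i, Y k ! i) | k i. i < length (X k)}"
  have R2: "p = p' \<longleftrightarrow> q = q'" if pq: "(p, q) \<in> R" "(p', q') \<in> R" for p q p' q'
  proof -
    obtain k i where ki: "p = X k ! i" "q = Y k ! i" "i < length (X k)" using pq(1) unfolding R_def by blast
    obtain k' i' where ki': "p' = X k' ! i'" "q' = Y k' ! i'" "i' < length (X k')" using pq(2) unfolding R_def by blast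
    define K where "K = max k k'"
    have K: "k \<le> K" "k' \<le> K" by (auto simp: K_def)
    have 1: "p = X K ! i" "q = Y K ! i" "i < length (X K)"
      using pre[OF K(1) ki(3)] ki lenm[OF K(1)] by auto
    have 2: "p' = X K ! i'" "q' = Y K ! i'" "i' < length (X K)"
      using pre[OF K(2) ki'(3)] ki' lenm[OF K(2)] by auto
    have "fv (FEq i i') \<subseteq> {..<length (X K)}" using 1 2 by auto
    then have "sat d Q (FEq i i') (tuple_assign (X K)) \<longleftrightarrow> sat d Q (FEq i i') (tuple_assign (Y K))"
      using eX[of K] unfolding eqv_def by blast
    then show ?thesis using 1 2 len[of K] by (simp add: tuple_assign_def)
  qed
  have Rp: "\<exists>q. (p, q) \<in> R" for p
  proof -
    obtain i where i: "i < length (X (Suc p))" "X (Suc p) ! i = p"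
      using BF_in(1)[of p d Q a b] by (auto simp: X_def in_set_conv_nth)
    have "(X (Suc p) ! i, Y (Suc p) ! i) \<in> R" using i(1) unfolding R_def by blast
    then show ?thesis using i(2) by auto
  qed
  have Rq: "\<exists>p. (p, q) \<in> R" for q
  proof -
    obtain i where i: "i < length (Y (Suc q))" "Y (Suc q) ! i = q"
      using BF_in(2)[of q d Q a b] by (auto simp: Y_def in_set_conv_nth)
    have "(X (Suc q) ! i, Y (Suc q) ! i) \<in> R" using i(1) len unfolding R_def by (metis (mono_tags, lifting) mem_Collect_eq)
    then show ?thesis using i(2) by auto
  qed
  define g where "g p = (SOME q. (p, q) \<in> R)" for p
  have gR: "(p, g p) \<in> R" for p unfolding g_def using Rp by (rule someI_ex)
  have YX: "Y k = map g (X k)" for k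
  proof (rule nth_equalityI)
    show "length (Y k) = length (map g (X k))" using len by simp
    fix i assume "i < length (Y k)"
    then have i: "i < length (X k)" using len by simp
    then have xy: "(X k ! i, Y k ! i) \<in> R" by (auto simp: R_def)
    have "Y k ! i = g (X k ! i)" using R2[OF xy gR[of "X k ! i"]] by simp
    then show "Y k ! i = map g (X k) ! i" using i by simp
  qed
  have "bij g"
  proof (rule bijI)
    show "inj g"
    proof (rule injI)
      fix p p' assume "g p = g p'"
      then show "p = p'" using R2[OF gR[of p] gR[of p']] by simp
    qed
    show "surj g" unfolding surj_def
    proof
      fix q obtain p where p: "(p, q) \<in> R" using Rq by blast
      have "q = g p" using R2[OF p gR[of p]] by simp
      then show "\<exists>x. q = g x" by blast
    qed
  qed
  moreover have "map g a = b" using YX[of 0] by (simp add: X_def Y_def)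
  moreover have "\<exists>c. E \<subseteq> set c \<and> eqv d Q c (map g c)" if fE: "finite E" for E
  proof -
    define K where "K = Suc (Max (insert 0 E))"
    have EK: "E \<subseteq> set (X K)"
    proof
      fix m assume m: "m \<in> E"
      then have "m \<le> Max (insert 0 E)" using fE by simp
      then have "Suc m \<le> K" by (simp add: K_def)
      then have "set (X (Suc m)) \<subseteq> set (X K)" by (rule setm)
      moreover have "m \<in> set (X (Suc m))" using BF_in(1)[of m d Q a b] unfolding X_def .
      ultimately show "m \<in> set (X K)" by blast
    qed
    have "eqv d Q (X K) (map g (X K))" using eX[of K] unfolding YX[of K] .
    then show ?thesis using EK by blast
  qed
  ultimately show ?thesis by (intro exI[of _ g]) auto
qed



lemma Aut_char:
  assumes hyp: "\<forall>i. fin_bool_comb_principal (d i) (Q i)" and b: "bij g"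
  shows "g \<in> Aut d Q \<longleftrightarrow> (\<forall>i W. finite W \<and> W \<subseteq> tuples (d i) \<longrightarrow> fcond (d i) (Q i) g W)"
proof
  assume "g \<in> Aut d Q"
  then show "\<forall>i W. finite W \<and> W \<subseteq> tuples (d i) \<longrightarrow> fcond (d i) (Q i) g W"
    using KL1 b by (auto simp: Aut_def)
next
  assume c: "\<forall>i W. finite W \<and> W \<subseteq> tuples (d i) \<longrightarrow> fcond (d i) (Q i) g W"
  have "fixes_quant (d i) g (Q i)" for i
  proof -
    obtain A bb where A: "\<forall>k. A k \<subseteq> tuples (d i)" and Qi: "Q i = bquant (d i) A bb"
      using hyp unfolding fin_bool_comb_principal_def by blast
    show ?thesis unfolding Qi by (rule KL2[OF b A]) (use c in \<open>simp add: Qi[symmetric]\<close>)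
  qed
  then show "g \<in> Aut d Q" using b by (auto simp: Aut_def)
qed

lemma fcond_cong:
  assumes "\<forall>w\<in>W. \<forall>x\<in>set w. h x = h' x"
  shows "fcond D QQ h W \<longleftrightarrow> fcond D QQ h' W"
proof -
  have "map h ` W = map h' ` W"
    using assms by (auto intro!: image_cong map_cong)
  then show ?thesis by (simp add: fcond_def)
qed

lemma closed_Aut:
  assumes hyp: "\<forall>i. fin_bool_comb_principal (d i) (Q i)"
  shows "closedin (top_of_set Sinf) (Aut d Q)"
proof -
  define T where "T = {h. \<exists>i W. finite W \<and> W \<subseteq> tuples (d i) \<and> \<not> fcond (d i) (Q i) h W}"
  have "open T"
  proof (subst open_subopen, intro ballI)
    fix h assume "h \<in> T"
    then obtain i W where W: "finite W" "W \<subseteq> tuples (d i)" "\<not> fcond (d i) (Q i) h W"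
      unfolding T_def by blast
    define E where "E = \<Union> (set ` W)"
    have fE: "finite E" using W(1) by (auto simp: E_def)
    define N where "N = {f. \<forall>x\<in>E. f (id x) \<in> {h x}}"
    have "open N" unfolding N_def by (rule product_topology_basis'[OF fE]) (simp add: open_discrete)
    moreover have "h \<in> N" by (auto simp: N_def)
    moreover have "N \<subseteq> T"
    proof
      fix f assume "f \<in> N"
      then have "\<forall>w\<in>W. \<forall>x\<in>set w. f x = h x" by (auto simp: N_def E_def)
      then have "\<not> fcond (d i) (Q i) f W" using W(3) fcond_cong by blast
      then show "f \<in> T" using W unfolding T_def by blast
    qed
    ultimately show "\<exists>T'. open T' \<and> h \<in> T' \<and> T' \<subseteq> T" by blast
  qed
  moreover have "Sinf - Aut d Q = Sinf \<inter> T"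
  proof (intro equalityI subsetI)
    fix h assume h: "h \<in> Sinf - Aut d Q"
    then have "bij h" by (simp add: Sinf_def)
    then have "\<not> (\<forall>i W. finite W \<and> W \<subseteq> tuples (d i) \<longrightarrow> fcond (d i) (Q i) h W)"
      using h Aut_char[OF hyp] by blast
    then show "h \<in> Sinf \<inter> T" using h unfolding T_def by blast
  next
    fix h assume h: "h \<in> Sinf \<inter> T"
    then have "bij h" by (simp add: Sinf_def)
    moreover have "\<not> (\<forall>i W. finite W \<and> W \<subseteq> tuples (d i) \<longrightarrow> fcond (d i) (Q i) h W)"
      using h unfolding T_def by blast
    ultimately show "h \<in> Sinf - Aut d Q" using h Aut_char[OF hyp] by blast
  qed
  ultimately have "openin (top_of_set Sinf) (Sinf - Aut d Q)"
    unfolding openin_open by blast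
  moreover have "Aut d Q \<subseteq> Sinf" by (auto simp: Aut_def Sinf_def)
  ultimately show ?thesis unfolding closedin_def by simp
qed

lemma orbit_eqv:
  assumes hyp: "\<forall>i. fin_bool_comb_principal (d i) (Q i)"
  shows "orbit_tuple (Aut d Q) a = {b \<in> tuples (length a). eqv d Q a b}"
proof (intro equalityI subsetI)
  fix b assume "b \<in> orbit_tuple (Aut d Q) a"
  then obtain g where "g \<in> Aut d Q" "b = map g a" by (auto simp: orbit_tuple_def)
  then show "b \<in> {b \<in> tuples (length a). eqv d Q a b}" using eqv_Aut by (auto simp: tuples_def)
next
  fix b assume "b \<in> {b \<in> tuples (length a). eqv d Q a b}"
  then have e: "eqv d Q a b" by auto
  obtain g where g: "bij g" "map g a = b"
    and E: "\<And>E. finite E \<Longrightarrow> \<exists>c. E \<subseteq> set c \<and> eqv d Q c (map g c)"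
    using back_forth[OF e] by blast
  have "g \<in> Aut d Q"
    unfolding Aut_char[OF hyp g(1)]
  proof (intro allI impI, elim conjE)
    fix i W assume W: "finite W" "W \<subseteq> tuples (d i)"
    have "finite (\<Union> (set ` W))" using W(1) by auto
    then obtain c where c: "\<Union> (set ` W) \<subseteq> set c" "eqv d Q c (map g c)" using E by blast
    then have "\<forall>w\<in>W. set w \<subseteq> set c" by auto
    then obtain \<phi> where \<phi>: "fv \<phi> \<subseteq> {..<length c}"
      "\<And>h. sat d Q \<phi> (tuple_assign (map h c)) \<longleftrightarrow> tuples (d i) - map h ` W \<in> Q i"
      using Wform[where W=W and d=d and i=i and c=c and Q=Q] W by blast
    have "sat d Q \<phi> (tuple_assign c) \<longleftrightarrow> sat d Q \<phi> (tuple_assign (map g c))"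
      using c(2) \<phi>(1) unfolding eqv_def by blast
    then show "fcond (d i) (Q i) g W" using \<phi>(2)[of id] \<phi>(2)[of g] by (simp add: fcond_def)
  qed
  then show "b \<in> orbit_tuple (Aut d Q) a" using g(2) by (auto simp: orbit_tuple_def)
qed

lemma definable_orbit:
  assumes hyp: "\<forall>i. fin_bool_comb_principal (d i) (Q i)"
  shows "definable d Q (length a) (orbit_tuple (Aut d Q) a)"
proof -
  define n where "n = length a"
  define Bad where "Bad = {b \<in> tuples n. \<not> eqv d Q a b}"
  have ex: "\<exists>\<psi>. fv \<psi> \<subseteq> {..<n} \<and> sat d Q \<psi> (tuple_assign a) \<and> \<not> sat d Q \<psi> (tuple_assign b)"
    if "b \<in> Bad" for b
  proof -
    from that have "\<not> eqv d Q a b" "length b = n" by (auto simp: Bad_def tuples_def)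
    then obtain \<phi> where \<phi>: "fv \<phi> \<subseteq> {..<n}"
      "\<not> (sat d Q \<phi> (tuple_assign a) \<longleftrightarrow> sat d Q \<phi> (tuple_assign b))"
      unfolding eqv_def n_def by auto
    show ?thesis
    proof (cases "sat d Q \<phi> (tuple_assign a)")
      case True then show ?thesis using \<phi> by blast
    next
      case False then show ?thesis using \<phi> by (intro exI[of _ "FNeg \<phi>"]) auto
    qed
  qed
  define ps where "ps b = (SOME \<psi>. fv \<psi> \<subseteq> {..<n} \<and> sat d Q \<psi> (tuple_assign a) \<and> \<not> sat d Q \<psi> (tuple_assign b))" for b
  have ps: "fv (ps b) \<subseteq> {..<n}" "sat d Q (ps b) (tuple_assign a)" "\<not> sat d Q (ps b) (tuple_assign b)"
    if "b \<in> Bad" for b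
    using someI_ex[OF ex[OF that]] unfolding ps_def by blast+
  define \<Phi> where "\<Phi> = FConj (\<lambda>k. if from_nat k \<in> Bad then ps (from_nat k) else TT)"
  have fv: "fv \<Phi> \<subseteq> {..<n}" using ps(1) by (auto simp: \<Phi>_def split: if_splits) blast
  have satP: "sat d Q \<Phi> e \<longleftrightarrow> (\<forall>b\<in>Bad. sat d Q (ps b) e)" for e
  proof
    assume "sat d Q \<Phi> e"
    then have h: "\<forall>k. sat d Q (if from_nat k \<in> Bad then ps (from_nat k) else TT) e"
      by (simp add: \<Phi>_def)
    show "\<forall>b\<in>Bad. sat d Q (ps b) e"
    proof
      fix b assume "b \<in> Bad"
      then show "sat d Q (ps b) e" using h[rule_format, of "to_nat b"] by simp
    qed
  qed (simp add: \<Phi>_def)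
  have "orbit_tuple (Aut d Q) a = {b \<in> tuples n. sat d Q \<Phi> (tuple_assign b)}"
  proof -
    have "eqv d Q a b \<longleftrightarrow> sat d Q \<Phi> (tuple_assign b)" if b: "b \<in> tuples n" for b
    proof
      assume e: "eqv d Q a b"
      show "sat d Q \<Phi> (tuple_assign b)"
        unfolding satP
      proof
        fix b' assume "b' \<in> Bad"
        then show "sat d Q (ps b') (tuple_assign b)"
          using ps[of b'] e by (auto simp: eqv_def n_def)
      qed
    next
      assume "sat d Q \<Phi> (tuple_assign b)"
      then show "eqv d Q a b" using ps(3)[of b] b unfolding satP Bad_def by blast
    qed
    then show ?thesis using orbit_eqv[OF hyp] by (auto simp: n_def)
  qed
  then show ?thesis using fv unfolding definable_def n_def by blast
qed

theorem proposition23: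
  fixes d :: "nat \<Rightarrow> nat" and Q :: "nat \<Rightarrow> nat list set set"
  assumes "\<forall>i. fin_bool_comb_principal (d i) (Q i)"
  shows "subgroup (Aut d Q) (BijGroup (UNIV :: nat set))
     \<and> closedin (top_of_set Sinf) (Aut d Q)
     \<and> (\<forall>a :: nat list. definable d Q (length a) (orbit_tuple (Aut d Q) a))"
  using subgroup_Aut closed_Aut[OF assms] definable_orbit[OF assms] by blast

end
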